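(* Let $C_n=(V,E)$ be the cycle graph on $n\ge 3$ vertices. Then two distinct vertices $\mathbf v(X),\mathbf v(Y)$ of $\mathrm{CUT}(C_n)$ are adjacent if and only if $|\delta(X\triangle Y)|=2$ (equivalently, the Hamming distance between $\mathbf v(X)$ and $\mathbf v(Y)$ is $2$). Moreover, the 1-skeleton of $\mathrm{CUT}(C_n)$ contains a clique of size $n=|E|$; hence $\omega(\mathrm{CUT}(C_n))\ge |E|$.
   Context: For an undirected graph $G=(V,E)$ and $S\subseteq V$, $\delta(S)\subseteq E$ denotes the set of edges with exactly one endpoint in $S$, and $\mathbf v(S)\in\{0,1\}^{E}$ is its incidence vector ($v(S)_e=1$ iff $e\in\delta(S)$). The cut polytope is $\mathrm{CUT}(G)=\operatorname{conv}\{\mathbf v(S):S\subseteq V\}\subset\mathbb R^{E}$. The 1-skeleton of a polytope is the graph whose vertices are the polytope's vertices and whose edges are its one-dimensional faces; $\omega$ denotes its clique number. $X\triangle Y$ denotes symmetric difference. *)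

theory Defs
  imports "HOL-Analysis.Analysis"
begin

definition cycle_vertices :: "nat \<Rightarrow> nat set" where
  "cycle_vertices n = {0..<n}"

definition cycle_edges :: "nat \<Rightarrow> nat set set" where
  "cycle_edges n = {{i, Suc i mod n} | i. i < n}"

definition delta :: "nat set set \<Rightarrow> nat set \<Rightarrow> nat set set" where
  "delta E S = {e \<in> E. card (e \<inter> S) = 1}"

text \<open>The space R^E is represented as real^'e, where ed :: 'e \<Rightarrow> nat set is a
  bijection from the index type onto the edge set E (a labelling of coordinates).\<close>
definition cut_vec :: "('e::finite \<Rightarrow> nat set) \<Rightarrow> nat set set \<Rightarrow> nat set \<Rightarrow> real ^ 'e" where
  "cut_vec ed E S = (\<chi> k. if ed k \<in> delta E S then 1 else 0)"

definition CUT :: "('e::finite \<Rightarrow> nat set) \<Rightarrow> nat set \<Rightarrow> nat set set \<Rightarrow> (real ^ 'e) set" where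
  "CUT ed V E = convex hull (cut_vec ed E ` Pow V)"

definition skel_adj :: "'a::euclidean_space set \<Rightarrow> 'a \<Rightarrow> 'a \<Rightarrow> bool" where
  "skel_adj P x y \<longleftrightarrow> x \<noteq> y \<and>
     (\<exists>F. F face_of P \<and> aff_dim F = 1 \<and> {v. v extreme_point_of F} = {x, y})"

definition hamming :: "real ^ 'e::finite \<Rightarrow> real ^ 'e \<Rightarrow> nat" where
  "hamming x y = card {k. x $ k \<noteq> y $ k}"

end

theory Submission
  imports Defs
begin

definition ind :: "'e::finite set \<Rightarrow> real^'e" where
  "ind A = (\<chi> k. if k \<in> A then 1 else 0)"

definition PP :: "(real^'e::finite) set" where
  "PP = convex hull (ind ` {B. even (card B)})"

lemma ind_inj: "ind A = ind B \<longleftrightarrow> A = B"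
  by (auto simp: ind_def vec_eq_iff split: if_splits)

lemma finite_S: "finite (ind ` {B::'e::finite set. even (card B)})"
  by simp

lemma PP_cube:
  assumes "x \<in> (PP :: (real^'e::finite) set)" shows "0 \<le> x$k \<and> x$k \<le> 1"
proof -
  have "PP \<subseteq> {x::real^'e. \<forall>k. 0 \<le> x$k \<and> x$k \<le> 1}"
    unfolding PP_def
  proof (rule hull_minimal)
    show "ind ` {B. even (card B)} \<subseteq> {x::real^'e. \<forall>k. 0 \<le> x$k \<and> x$k \<le> 1}"
      by (auto simp: ind_def)
    show "convex {x::real^'e. \<forall>k. 0 \<le> x$k \<and> x$k \<le> 1}"
    proof (rule convexI)
      fix x y :: "real^'e" and u v :: real
      assume x: "x \<in> {x::real^'e. \<forall>k. 0 \<le> x$k \<and> x$k \<le> 1}"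
        and y: "y \<in> {x::real^'e. \<forall>k. 0 \<le> x$k \<and> x$k \<le> 1}"
        and uv0: "0 \<le> u" "0 \<le> v" "u + v = 1"
      have uv: "0 \<le> u \<and> 0 \<le> v \<and> u + v = 1" using uv0 by simp
      have "0 \<le> u * x $ k + v * y $ k \<and> u * x $ k + v * y $ k \<le> 1" for k
      proof -
        have h: "0 \<le> x$k" "x$k \<le> 1" "0 \<le> y$k" "y$k \<le> 1" using x y by auto
        have "u * x $ k \<le> u" "v * y $ k \<le> v" using h uv
          by (simp_all add: mult_left_le)
        moreover have "0 \<le> u * x $ k" "0 \<le> v * y $ k" using h uv by simp_all
        ultimately show ?thesis using uv by linarith
      qed
      then show "u *\<^sub>R x + v *\<^sub>R y \<in> {x::real^'e. \<forall>k. 0 \<le> x$k \<and> x$k \<le> 1}" by simp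
    qed
  qed
  then show ?thesis using assms by blast
qed

lemma ind_in_PP: "even (card C) \<Longrightarrow> ind C \<in> PP"
  unfolding PP_def by (rule hull_inc) auto

lemma ind_extreme:
  fixes C :: "'e::finite set"
  assumes "even (card C)" shows "ind C extreme_point_of PP"
  unfolding extreme_point_of_def
proof (intro conjI ballI)
  show "ind C \<in> PP" using assms by (rule ind_in_PP)
  fix a b :: "real^'e" assume a: "a \<in> PP" and b: "b \<in> PP"
  show "ind C \<notin> open_segment a b"
  proof
    assume "ind C \<in> open_segment a b"
    then obtain u where u: "a \<noteq> b" "0 < u" "u < 1" "ind C = (1 - u) *\<^sub>R a + u *\<^sub>R b"
      by (auto simp: in_segment)
    have "a $ k = b $ k" for k
    proof -
      have e: "ind C $ k = (1-u) * a$k + u * b$k" using u(4) by simp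
      have ra: "0 \<le> a$k" "a$k \<le> 1" using PP_cube[OF a] by auto
      have rb: "0 \<le> b$k" "b$k \<le> 1" using PP_cube[OF b] by auto
      show ?thesis
      proof (cases "k \<in> C")
        case True
        then have "(1-u) * (1 - a$k) + u * (1 - b$k) = 0" using e by (simp add: ind_def algebra_simps)
        moreover have "(1-u) * (1 - a$k) \<ge> 0" "u * (1 - b$k) \<ge> 0" using u ra rb by simp_all
        ultimately have "(1-u) * (1 - a$k) = 0" "u * (1 - b$k) = 0" by linarith+
        then show ?thesis using u by simp
      next
        case False
        then have "(1-u) * a$k + u * b$k = 0" using e by (simp add: ind_def)
        moreover have "(1-u) * a$k \<ge> 0" "u * b$k \<ge> 0" using u ra rb by simp_all
        ultimately have "(1-u) * a$k = 0" "u * b$k = 0" by linarith+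
        then show ?thesis using u by simp
      qed
    qed
    then show False using u(1) by (simp add: vec_eq_iff)
  qed
qed

lemma card_symdiff:
  fixes A B :: "'a set" assumes "finite A" "finite B"
  shows "card (A \<union> B - A \<inter> B) + 2 * card (A \<inter> B) = card A + card B"
proof -
  have "card (A \<union> B - A \<inter> B) = card (A \<union> B) - card (A \<inter> B)"
    by (rule card_Diff_subset) (use assms in auto)
  moreover have "card (A \<union> B) + card (A \<inter> B) = card A + card B"
    using assms card_Un_Int by metis
  moreover have "card (A \<inter> B) \<le> card (A \<union> B)" using assms by (intro card_mono) auto
  ultimately show ?thesis by linarith
qed

lemma even_symdiff:
  fixes A B :: "'e::finite set"
  assumes "even (card A)" "even (card B)" shows "even (card (A \<union> B - A \<inter> B))"
  using card_symdiff[of A B] assms by (simp, presburger)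

lemma hamming_ind: "hamming (ind A) (ind B) = card (A \<union> B - A \<inter> B)"
proof -
  have "{k. ind A $ k \<noteq> ind B $ k} = A \<union> B - A \<inter> B" by (auto simp: ind_def)
  then show ?thesis by (simp add: hamming_def)
qed

lemma midpoint_vec: "midpoint (x::real^'n) y $ k = (x$k + y$k) / 2"
  by (simp add: midpoint_def)

lemma adj_imp2:
  fixes A B :: "'e::finite set"
  assumes eA: "even (card A)" and eB: "even (card B)"
    and adj: "skel_adj PP (ind A) (ind B)"
  shows "card (A \<union> B - A \<inter> B) = 2"
proof (rule ccontr)
  assume n2: "card (A \<union> B - A \<inter> B) \<noteq> 2"
  define D where "D = A \<union> B - A \<inter> B"
  obtain F where F: "F face_of PP" and ext: "{v. v extreme_point_of F} = {ind A, ind B}"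
    and ne: "ind A \<noteq> ind B"
    using adj unfolding skel_adj_def by blast
  have AB: "A \<noteq> B" using ne by auto
  have eD: "even (card D)" unfolding D_def by (rule even_symdiff[OF eA eB])
  have "D \<noteq> {}" using AB unfolding D_def by auto
  then have "card D \<noteq> 0" by simp
  with eD n2 have c3: "card D > 2" unfolding D_def by presburger
  then obtain i j where ij: "i \<in> D" "j \<in> D" "i \<noteq> j"
    by (metis One_nat_def card_le_Suc0_iff_eq finite not_less_eq_eq numeral_2_eq_2 order_less_imp_le)
  have "D - {i,j} \<noteq> {}"
  proof
    assume "D - {i,j} = {}"
    then have "card D \<le> card {i,j}" by (intro card_mono) auto
    also have "\<dots> \<le> 2" by (simp add: card_insert_le_m1)
    finally show False using c3 by simp
  qed
  then obtain l where l: "l \<in> D" "l \<noteq> i" "l \<noteq> j" by blast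
  define T where "T = {i,j}"
  have eT: "even (card T)" using ij unfolding T_def by simp
  define Z where "Z = A \<union> T - A \<inter> T"
  define W where "W = B \<union> T - B \<inter> T"
  have eZ: "even (card Z)" unfolding Z_def by (rule even_symdiff[OF eA eT])
  have eW: "even (card W)" unfolding W_def by (rule even_symdiff[OF eB eT])
  have TD: "T \<subseteq> D" using ij unfolding T_def by auto
  have mid: "midpoint (ind Z) (ind W) = midpoint (ind A) (ind B)"
  proof (subst vec_eq_iff, intro allI)
    fix k
    show "midpoint (ind Z) (ind W) $ k = midpoint (ind A) (ind B) $ k"
      using TD unfolding midpoint_vec Z_def W_def D_def
      by (cases "k \<in> A"; cases "k \<in> B"; cases "k \<in> T"; auto simp: ind_def)
  qed
  have ZW: "ind Z \<noteq> ind W"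
    using ij unfolding ind_inj Z_def W_def T_def D_def by auto
  have xF: "ind A \<in> F" "ind B \<in> F" using ext unfolding extreme_point_of_def by auto
  have cF: "convex F" using F by (rule face_of_imp_convex)
  have "midpoint (ind A) (ind B) \<in> F"
    using closed_segment_subset[OF xF cF] midpoint_in_closed_segment by blast
  then have mZ: "midpoint (ind Z) (ind W) \<in> F" using mid by simp
  have "ind Z \<in> F"
    using F mZ ZW ind_in_PP[OF eZ] ind_in_PP[OF eW]
    unfolding face_of_def by (meson midpoint_in_open_segment)
  then have "ind Z extreme_point_of F"
    using extreme_point_of_face[OF F] ind_extreme[OF eZ] by blast
  then have "ind Z \<in> {ind A, ind B}" using ext by blast
  then have "Z = A \<or> Z = B" by (auto simp: ind_inj)
  moreover have "Z \<noteq> A" using ij unfolding Z_def T_def by auto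
  moreover have "Z \<noteq> B" using l unfolding Z_def T_def D_def by auto
  ultimately show False by blast
qed

lemma inner_ind: "a \<bullet> ind C = (\<Sum>k\<in>C. a$k)"
proof -
  have "a \<bullet> ind C = (\<Sum>k\<in>UNIV. if k \<in> C then a$k else 0)"
    unfolding inner_vec_def ind_def by (intro sum.cong) auto
  also have "\<dots> = (\<Sum>k\<in>C. a$k)" by (simp add: sum.If_cases)
  finally show ?thesis .
qed

lemma two_sub:
  assumes "i \<noteq> j" "P \<subseteq> {i,j}" "Q \<subseteq> {i,j}" "Q \<union> R = {i,j}" "Q \<inter> R = {}"
    "even (card P + card Q)"
  shows "P = Q \<or> P = R"
proof -
  have sub: "X \<subseteq> {i,j} \<Longrightarrow> X = {} \<or> X = {i} \<or> X = {j} \<or> X = {i,j}" for X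
    by blast
  have R: "R = {i,j} - Q" using assms(4,5) by blast
  show ?thesis
    using sub[OF assms(2)] sub[OF assms(3)] assms(1,6) unfolding R
    by (elim disjE) (simp_all add: insert_Diff_if)
qed

lemma two_imp_adj:
  fixes A B :: "'e::finite set"
  assumes eA: "even (card A)" and eB: "even (card B)"
    and c2: "card (A \<union> B - A \<inter> B) = 2"
  shows "skel_adj PP (ind A) (ind B)"
proof -
  define D where "D = A \<union> B - A \<inter> B"
  obtain i j where ij: "D = {i,j}" "i \<noteq> j" using c2 unfolding D_def[symmetric]
    by (meson card_2_iff)
  define a :: "real^'e" where "a = (\<chi> k. of_bool (k \<in> A - D) - of_bool (k \<notin> A \<union> D))"
  define M where "M = real (card (A - D))"
  have val: "a \<bullet> ind C = real (card (C \<inter> (A-D))) - real (card (C - (A \<union> D)))" for C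
  proof -
    have "a \<bullet> ind C = (\<Sum>k\<in>C. of_bool (k \<in> A - D) - of_bool (k \<notin> A \<union> D))"
      unfolding inner_ind a_def by simp
    also have "\<dots> = real (card (C \<inter> {k. k \<in> A - D})) - real (card (C \<inter> {k. k \<notin> A \<union> D}))"
      by (simp only: sum_subtractf sum_of_bool_eq finite)
    also have "C \<inter> {k. k \<in> A - D} = C \<inter> (A - D)" by blast
    also have "C \<inter> {k. k \<notin> A \<union> D} = C - (A \<union> D)" by blast
    finally show ?thesis .
  qed
  have le: "a \<bullet> ind C \<le> M" for C
  proof -
    have "card (C \<inter> (A-D)) \<le> card (A - D)" by (intro card_mono) auto
    then show ?thesis unfolding val M_def by simp
  qed
  have eqv: "C = A \<or> C = B" if eC: "even (card C)" and h: "a \<bullet> ind C = M" for C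
  proof -
    have c1: "card (C \<inter> (A-D)) \<le> card (A - D)" by (intro card_mono) auto
    with h have "card (C \<inter> (A-D)) = card (A - D)" "card (C - (A \<union> D)) = 0"
      unfolding val M_def by linarith+
    then have "C \<inter> (A-D) = A - D" "C - (A \<union> D) = {}"
      using card_subset_eq[of "A-D" "C \<inter> (A-D)"] by auto
    then have CD: "C - D = A - D" by blast
    have BD: "B - D = A - D" unfolding D_def by blast
    have cardsplit: "card X = card (X - D) + card (X \<inter> D)" for X :: "'e set"
      by (metis add.commute card_Int_Diff finite)
    have hev: "even (card (C \<inter> D) + card (A \<inter> D))"
    proof -
      have "card (C - D) = card (A - D)" using CD by simp
      then have "card C + card A = (card (C \<inter> D) + card (A \<inter> D)) + 2 * card (A - D)"
        using cardsplit[of C] cardsplit[of A] by simp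
      moreover have "even (card C + card A)" using eC eA by simp
      ultimately show ?thesis by (metis even_add even_mult_iff even_numeral)
    qed
    have h12: "C \<inter> D \<subseteq> {i,j}" "A \<inter> D \<subseteq> {i,j}" using ij(1) by blast+
    have h34': "A \<inter> D \<union> B \<inter> D = D" "A \<inter> D \<inter> (B \<inter> D) = {}"
      unfolding D_def by blast+
    have h34: "A \<inter> D \<union> B \<inter> D = {i,j}" "A \<inter> D \<inter> (B \<inter> D) = {}"
      using h34' ij(1) by simp_all
    have "C \<inter> D = A \<inter> D \<or> C \<inter> D = B \<inter> D"
      by (rule two_sub[OF ij(2) h12 h34 hev])
    then show ?thesis
    proof
      assume "C \<inter> D = A \<inter> D"
      then have "C = A" using CD by blast
      then show ?thesis by simp
    next
      assume "C \<inter> D = B \<inter> D"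
      then have "C = B" using CD BD by blast
      then show ?thesis by simp
    qed
  qed
  define F where "F = PP \<inter> {x. a \<bullet> x = M}"
  have PPle: "PP \<subseteq> {x. a \<bullet> x \<le> M}"
    unfolding PP_def by (rule hull_minimal) (auto simp: le convex_halfspace_le)
  have face: "F face_of PP"
    unfolding F_def
    by (rule face_of_Int_supporting_hyperplane_le) (use PPle in \<open>auto simp: PP_def\<close>)
  have hF: "F face_of convex hull (ind ` {B::'e set. even (card B)})" using face unfolding PP_def .
  obtain S' where S': "S' \<subseteq> ind ` {B. even (card B)}" "F = convex hull S'"
    using face_of_convex_hull_subset[OF finite_imp_compact[OF finite_S] hF] by blast
  have S'sub: "S' \<subseteq> {ind A, ind B}"
  proof
    fix s assume s: "s \<in> S'"
    have "s \<in> ind ` {B. even (card B)}" using S'(1) s by (rule subsetD)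
    then obtain C where C0: "C \<in> {B. even (card B)}" "s = ind C" by (rule imageE)
    have C: "even (card C)" "s = ind C" using C0 by simp_all
    have "s \<in> convex hull S'" by (rule hull_inc[OF s])
    then have "s \<in> F" using S'(2) by simp
    then have "a \<bullet> ind C = M" using C unfolding F_def by simp
    then show "s \<in> {ind A, ind B}" using eqv[OF C(1)] C by auto
  qed
  have vA: "a \<bullet> ind A = M" unfolding val M_def by (simp add: Int_absorb1)
  have vB: "a \<bullet> ind B = M"
  proof -
    have "B \<inter> (A - D) = A - D" "B - (A \<union> D) = {}" unfolding D_def by blast+
    then show ?thesis unfolding val M_def by simp
  qed
  have inF: "ind A \<in> F" "ind B \<in> F"
    using vA vB ind_in_PP[OF eA] ind_in_PP[OF eB] unfolding F_def by auto
  have Feq: "F = convex hull {ind A, ind B}"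
  proof
    show "F \<subseteq> convex hull {ind A, ind B}" using S' S'sub hull_mono by blast
    show "convex hull {ind A, ind B} \<subseteq> F"
      using inF face_of_imp_convex[OF face] by (intro hull_minimal) auto
  qed
  have ne: "ind A \<noteq> ind B" using c2 by (auto simp: ind_inj)
  show ?thesis
    unfolding skel_adj_def
  proof (intro conjI exI[of _ F])
    show "ind A \<noteq> ind B" by fact
    show "F face_of PP" by fact
    show "aff_dim F = 1" unfolding Feq aff_dim_convex_hull using ne by simp
    show "{v. v extreme_point_of F} = {ind A, ind B}"
      unfolding Feq segment_convex_hull[symmetric] extreme_point_of_segment by auto
  qed
qed


definition eg :: "nat \<Rightarrow> nat \<Rightarrow> nat set" where "eg n i = {i, Suc i mod n}"
definition J :: "nat \<Rightarrow> nat set \<Rightarrow> nat set" where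
  "J n X = {i. i < n \<and> (i \<in> X) \<noteq> (Suc i mod n \<in> X)}"

lemma edges_eq: "cycle_edges n = eg n ` {..<n}"
  by (auto simp: cycle_edges_def eg_def)

lemma suc_mod_ne: "n \<ge> 2 \<Longrightarrow> i < n \<Longrightarrow> Suc i mod n \<noteq> i"
proof (cases "Suc i < n")
  case True then show ?thesis by simp
next
  case False
  assume "n \<ge> 2" "i < n"
  then have "Suc i = n" using False by simp
  then show ?thesis using \<open>n \<ge> 2\<close> by auto
qed

lemma card_pair_Int: "a \<noteq> b \<Longrightarrow> card ({a,b} \<inter> S) = 1 \<longleftrightarrow> (a \<in> S) \<noteq> (b \<in> S)"
  by (cases "a \<in> S"; cases "b \<in> S") auto

lemma delta_cycle:
  assumes "n \<ge> 2" shows "delta (cycle_edges n) X = eg n ` J n X"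
proof
  show "delta (cycle_edges n) X \<subseteq> eg n ` J n X"
  proof
    fix e assume "e \<in> delta (cycle_edges n) X"
    then obtain i where i: "i < n" "e = eg n i" "card (e \<inter> X) = 1"
      unfolding delta_def edges_eq by auto
    have ne: "i \<noteq> Suc i mod n" using suc_mod_ne[OF assms i(1)] by metis
    then have "i \<in> J n X" using card_pair_Int[OF ne, of X] i
      by (simp add: J_def eg_def)
    then show "e \<in> eg n ` J n X" using i by auto
  qed
  show "eg n ` J n X \<subseteq> delta (cycle_edges n) X"
  proof
    fix e assume "e \<in> eg n ` J n X"
    then obtain i where i: "i < n" "e = eg n i" "(i \<in> X) \<noteq> (Suc i mod n \<in> X)"
      unfolding J_def by auto
    have ne: "i \<noteq> Suc i mod n" using suc_mod_ne[OF assms i(1)] by metis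
    then have "card (e \<inter> X) = 1" using card_pair_Int[OF ne, of X] i
      by (simp add: eg_def)
    then show "e \<in> delta (cycle_edges n) X" using i unfolding delta_def edges_eq by auto
  qed
qed

lemma inj_eg:
  assumes "n \<ge> 3" shows "inj_on (eg n) {..<n}"
proof
  fix i j assume i: "i \<in> {..<n}" and j: "j \<in> {..<n}" and e: "eg n i = eg n j"
  show "i = j"
  proof (rule ccontr)
    assume ne: "i \<noteq> j"
    then have "i = Suc j mod n \<and> Suc i mod n = j"
      using e ne unfolding eg_def doubleton_eq_iff by blast
    then have h: "i = Suc j mod n" "j = Suc i mod n"
    proof -
      assume a: "i = Suc j mod n \<and> Suc i mod n = j"
      show "i = Suc j mod n" using a by (rule conjunct1)
      show "j = Suc i mod n" using conjunct2[OF a] by (rule sym)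
    qed
    show False
    proof (cases "Suc j < n")
      case True
      then have ij: "i = Suc j" using h(1) by simp
      show False
      proof (cases "Suc i < n")
        case True
        then have "j = Suc i" using h(2) by simp
        then show False using ij by simp
      next
        case False
        then have "Suc i = n" using i by simp
        then have "j = 0" using h(2) by simp
        then show False using ij \<open>Suc i = n\<close> assms by simp
      qed
    next
      case False
      then have "Suc j = n" using j by simp
      then have "i = 0" using h(1) by simp
      then have "j = 1" using h(2) assms by simp
      then show False using \<open>Suc j = n\<close> assms by simp
    qed
  qed
qed

lemma parity_count:
  fixes g :: "nat \<Rightarrow> bool"
  shows "even (card {i. i < m \<and> g i \<noteq> g (Suc i)}) \<longleftrightarrow> (g 0 = g m)"
proof (induction m)
  case 0 then show ?case by simp
next
  case (Suc m)
  show ?case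
  proof (cases "g m \<noteq> g (Suc m)")
    case True
    then have "{i. i < Suc m \<and> g i \<noteq> g (Suc i)} = insert m {i. i < m \<and> g i \<noteq> g (Suc i)}"
      by auto
    then have "card {i. i < Suc m \<and> g i \<noteq> g (Suc i)} = Suc (card {i. i < m \<and> g i \<noteq> g (Suc i)})"
      by simp
    moreover have eq: "(g 0 = g (Suc m)) = (\<not> (g 0 = g m))" using True
      by (metis (full_types))
    ultimately show ?thesis using Suc.IH by simp
  next
    case False
    then have "{i. i < Suc m \<and> g i \<noteq> g (Suc i)} = {i. i < m \<and> g i \<noteq> g (Suc i)}"
      using less_Suc_eq by auto
    then show ?thesis using Suc False by auto
  qed
qed

lemma J_sub: "J n X \<subseteq> {..<n}" by (auto simp: J_def)

lemma J_even: assumes "n \<ge> 1" shows "even (card (J n X))"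
proof -
  define g where "g i = (i mod n \<in> X)" for i
  have "J n X = {i. i < n \<and> g i \<noteq> g (Suc i)}"
    unfolding J_def g_def by auto
  moreover have "g 0 = g n" unfolding g_def by simp
  ultimately show ?thesis using parity_count[of n g] by simp
qed

lemma J_symdiff: "J n (X \<union> Y - X \<inter> Y) = J n X \<union> J n Y - J n X \<inter> J n Y"
  by (auto simp: J_def)

lemma J_surj:
  assumes n: "n \<ge> 1" and I: "I \<subseteq> {..<n}" and eI: "even (card I)"
  shows "J n {v. v < n \<and> odd (card {k\<in>I. k < v})} = I"
proof -
  define c where "c v = card {k\<in>I. k < v}" for v
  define X where "X = {v. v < n \<and> odd (c v)}"
  have cS: "c (Suc v) = c v + (if v \<in> I then 1 else 0)" for v
  proof (cases "v \<in> I")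
    case True
    then have "{k\<in>I. k < Suc v} = insert v {k\<in>I. k < v}" by auto
    then show ?thesis using True unfolding c_def by simp
  next
    case False
    then have "{k\<in>I. k < Suc v} = {k\<in>I. k < v}" using less_Suc_eq by auto
    then show ?thesis using False unfolding c_def by simp
  qed
  have cn: "c n = card I" unfolding c_def using I by (metis (no_types, lifting) Collect_cong lessThan_iff mem_Collect_eq subsetD Collect_mem_eq)
  have "i \<in> J n X \<longleftrightarrow> i \<in> I" for i
  proof (cases "i < n")
    case False then show ?thesis using I by (auto simp: J_def)
  next
    case True
    show ?thesis
    proof (cases "Suc i < n")
      case True
      then show ?thesis using \<open>i < n\<close> cS[of i] unfolding J_def X_def by auto
    next
      case False
      then have si: "Suc i = n" using \<open>i < n\<close> by simp
      then have "Suc i mod n = 0" by simp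
      moreover have "c 0 = 0" unfolding c_def by simp
      moreover have "even (c i + (if i \<in> I then 1 else 0))" using cS[of i] si cn eI by simp
      ultimately show ?thesis using \<open>i < n\<close> n unfolding J_def X_def by auto
    qed
  qed
  then show ?thesis unfolding X_def c_def by blast
qed


theorem mainTheorem7:
  fixes n :: nat and ed :: "'e::finite \<Rightarrow> nat set"
  assumes "n \<ge> 3"
    and "bij_betw ed UNIV (cycle_edges n)"
  shows "(\<forall>X Y. X \<subseteq> cycle_vertices n \<longrightarrow> Y \<subseteq> cycle_vertices n \<longrightarrow>
             cut_vec ed (cycle_edges n) X \<noteq> cut_vec ed (cycle_edges n) Y \<longrightarrow>
             (skel_adj (CUT ed (cycle_vertices n) (cycle_edges n))
                (cut_vec ed (cycle_edges n) X) (cut_vec ed (cycle_edges n) Y)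
              \<longleftrightarrow> card (delta (cycle_edges n) (X \<union> Y - X \<inter> Y)) = 2)
           \<and> (card (delta (cycle_edges n) (X \<union> Y - X \<inter> Y)) = 2
              \<longleftrightarrow> hamming (cut_vec ed (cycle_edges n) X) (cut_vec ed (cycle_edges n) Y) = 2))
       \<and> (\<exists>K. K \<subseteq> {x. x extreme_point_of CUT ed (cycle_vertices n) (cycle_edges n)}
             \<and> card K = card (cycle_edges n)
             \<and> (\<forall>x\<in>K. \<forall>y\<in>K. x \<noteq> y \<longrightarrow>
                   skel_adj (CUT ed (cycle_vertices n) (cycle_edges n)) x y))"
proof -
  have n3: "n \<ge> 3" by fact
  have n2: "n \<ge> 2" "n \<ge> 1" using n3 by auto
  have bij_eg: "bij_betw (eg n) {..<n} (cycle_edges n)"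
    unfolding bij_betw_def edges_eq using inj_eg[OF n3] by simp
  define \<beta> where "\<beta> = inv_into {..<n} (eg n) \<circ> ed"
  have b\<beta>: "bij_betw \<beta> UNIV {..<n}"
    unfolding \<beta>_def by (rule bij_betw_trans[OF assms(2) bij_betw_inv_into[OF bij_eg]])
  have inj\<beta>: "inj \<beta>" using b\<beta> by (simp add: bij_betw_def)
  have r\<beta>: "range \<beta> = {..<n}" using b\<beta> by (simp add: bij_betw_def)
  have \<beta>lt: "\<beta> k < n" for k using r\<beta> by auto
  have ed\<beta>: "ed k = eg n (\<beta> k)" for k
  proof -
    have "range ed = eg n ` {..<n}" using assms(2) edges_eq unfolding bij_betw_def by auto
    then have "ed k \<in> eg n ` {..<n}" by (metis rangeI)
    then show ?thesis unfolding \<beta>_def by (simp add: f_inv_into_f)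
  qed
  define cs where "cs X = \<beta> -` J n X" for X
  have cv: "cut_vec ed (cycle_edges n) X = ind (cs X)" for X
  proof -
    have "ed k \<in> delta (cycle_edges n) X \<longleftrightarrow> k \<in> cs X" for k
    proof -
      have "ed k \<in> delta (cycle_edges n) X \<longleftrightarrow> eg n (\<beta> k) \<in> eg n ` J n X"
        unfolding delta_cycle[OF n2(1)] ed\<beta> ..
      also have "\<dots> \<longleftrightarrow> \<beta> k \<in> J n X"
        by (rule inj_on_image_mem_iff[OF inj_eg[OF n3]]) (use \<beta>lt J_sub in auto)
      finally show ?thesis unfolding cs_def by simp
    qed
    then show ?thesis unfolding cut_vec_def ind_def by simp
  qed
  have cardvim: "card (\<beta> -` I) = card I" if "I \<subseteq> {..<n}" for I
  proof -
    have "\<beta> ` (\<beta> -` I) = I" using that r\<beta> by auto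
    moreover have "card (\<beta> ` (\<beta> -` I)) = card (\<beta> -` I)"
      by (rule card_image) (use inj\<beta> in \<open>auto intro: inj_on_subset\<close>)
    ultimately show ?thesis by simp
  qed
  have evcs: "even (card (cs X))" for X
    unfolding cs_def cardvim[OF J_sub] by (rule J_even[OF n2(2)])
  have img: "cut_vec ed (cycle_edges n) ` Pow (cycle_vertices n) = ind ` {B. even (card B)}"
  proof
    show "cut_vec ed (cycle_edges n) ` Pow (cycle_vertices n) \<subseteq> ind ` {B. even (card B)}"
      using cv evcs by auto
    show "ind ` {B. even (card B)} \<subseteq> cut_vec ed (cycle_edges n) ` Pow (cycle_vertices n)"
    proof
      fix x assume "x \<in> ind ` {B::'e set. even (card B)}"
      then obtain B :: "'e set" where B: "even (card B)" "x = ind B" by auto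
      define I where "I = \<beta> ` B"
      have I: "I \<subseteq> {..<n}" unfolding I_def using r\<beta> by auto
      have cI: "card I = card B" unfolding I_def
        by (rule card_image) (use inj\<beta> in \<open>auto intro: inj_on_subset\<close>)
      define X where "X = {v. v < n \<and> odd (card {k\<in>I. k < v})}"
      have JX: "J n X = I" unfolding X_def by (rule J_surj[OF n2(2) I]) (use B cI in simp)
      have "cs X = B" unfolding cs_def JX I_def by (rule inj_vimage_image_eq[OF inj\<beta>])
      moreover have "X \<in> Pow (cycle_vertices n)" unfolding X_def cycle_vertices_def by auto
      ultimately show "x \<in> cut_vec ed (cycle_edges n) ` Pow (cycle_vertices n)"
        using B cv by (metis image_eqI)
    qed
  qed
  have CUTeq: "CUT ed (cycle_vertices n) (cycle_edges n) = PP"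
    unfolding CUT_def img PP_def ..
  have cardd: "card (delta (cycle_edges n) (X \<union> Y - X \<inter> Y)) = card (cs X \<union> cs Y - cs X \<inter> cs Y)" for X Y
  proof -
    have "card (delta (cycle_edges n) (X \<union> Y - X \<inter> Y)) = card (J n (X \<union> Y - X \<inter> Y))"
      unfolding delta_cycle[OF n2(1)]
      by (rule card_image) (rule inj_on_subset[OF inj_eg[OF n3] J_sub])
    also have "\<dots> = card (\<beta> -` (J n (X \<union> Y - X \<inter> Y)))"
      by (rule cardvim[symmetric, OF J_sub])
    also have "\<beta> -` (J n (X \<union> Y - X \<inter> Y)) = cs X \<union> cs Y - cs X \<inter> cs Y"
      unfolding J_symdiff cs_def by auto
    finally show ?thesis .
  qed
  have cardE: "card (cycle_edges n) = CARD('e)"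
    using bij_betw_same_card[OF assms(2)] by simp
  show ?thesis
  proof (intro conjI allI impI)
    fix X Y :: "nat set"
    assume ne: "cut_vec ed (cycle_edges n) X \<noteq> cut_vec ed (cycle_edges n) Y"
    show "skel_adj (CUT ed (cycle_vertices n) (cycle_edges n))
                (cut_vec ed (cycle_edges n) X) (cut_vec ed (cycle_edges n) Y)
              \<longleftrightarrow> card (delta (cycle_edges n) (X \<union> Y - X \<inter> Y)) = 2"
      unfolding CUTeq cv cardd
      using adj_imp2[OF evcs evcs] two_imp_adj[OF evcs evcs] by blast
    show "card (delta (cycle_edges n) (X \<union> Y - X \<inter> Y)) = 2
              \<longleftrightarrow> hamming (cut_vec ed (cycle_edges n) X) (cut_vec ed (cycle_edges n) Y) = 2"
      unfolding cv cardd hamming_ind ..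
  next
    obtain k0 :: 'e where True by simp
    define f where "f k = (if k = k0 then {} else {k0, k})" for k
    define K where "K = ind ` range f"
    have evf: "even (card (f k))" for k unfolding f_def by auto
    have injf: "inj f" unfolding inj_def f_def by auto
    have injind: "inj ind" unfolding inj_def ind_inj by simp
    have symd: "card (f k \<union> f l - f k \<inter> f l) = 2" if "f k \<noteq> f l" for k l
    proof (cases "k = k0")
      case True
      then have "l \<noteq> k0" using that by auto
      then show ?thesis using True unfolding f_def by auto
    next
      case False
      show ?thesis
      proof (cases "l = k0")
        case True then show ?thesis using False unfolding f_def by auto
      next
        case F2: False
        have "k \<noteq> l" using that by auto
        then have "f k \<union> f l - f k \<inter> f l = {k, l}" using False F2 unfolding f_def by auto
        then show ?thesis using \<open>k \<noteq> l\<close> by simp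
      qed
    qed
    show "\<exists>K. K \<subseteq> {x. x extreme_point_of CUT ed (cycle_vertices n) (cycle_edges n)}
             \<and> card K = card (cycle_edges n)
             \<and> (\<forall>x\<in>K. \<forall>y\<in>K. x \<noteq> y \<longrightarrow>
                   skel_adj (CUT ed (cycle_vertices n) (cycle_edges n)) x y)"
    proof (intro exI[of _ K] conjI ballI impI)
      show "K \<subseteq> {x. x extreme_point_of CUT ed (cycle_vertices n) (cycle_edges n)}"
        unfolding CUTeq K_def using ind_extreme evf by auto
      have "card K = card (range f)" unfolding K_def
        by (rule card_image) (use injind in \<open>auto intro: inj_on_subset\<close>)
      also have "\<dots> = CARD('e)" using injf by (simp add: card_image)
      finally show "card K = card (cycle_edges n)" using cardE by simp
      fix x y assume "x \<in> K" "y \<in> K" "x \<noteq> y"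
      then obtain k l where "x = ind (f k)" "y = ind (f l)" "f k \<noteq> f l" unfolding K_def by (auto simp: ind_inj)
      then show "skel_adj (CUT ed (cycle_vertices n) (cycle_edges n)) x y"
        unfolding CUTeq using two_imp_adj[OF evf evf symd] by simp
    qed
  qed
qed

end
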